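(* Let $q,r,\mu,\nu$ be positive integers and $z\in\mathbb{C}$. Define $\mathcal{A}(z)\in\mathbb{C}^{\mu q\times\nu r}$ as the block matrix whose $(i,j)$ block ($i=0,\dots,\mu-1$, $j=0,\dots,\nu-1$) is $A^{i+j}(z)$, define $\bar{\mathcal{A}}\in\mathbb{R}^{\mu q\times \nu r}$ as the block matrix whose $(i,j)$ block is $(S_q^\top)^jA^0S_r^i$, and define $\mathcal{L}_{\mu,q}(z)\in\mathbb{C}^{\mu q\times\mu q}$ as the block lower triangular matrix with $(i,j)$ block $\binom{i}{j}J_q(z)^{i-j}$ for $i\ge j$ and $0$ for $i<j$ ($i,j=0,\dots,\mu-1$), and $\mathcal{L}_{\nu,r}(z)\in\mathbb{C}^{\nu r\times\nu r}$ analogously with $J_r(z)$. Then \[ \mathcal{A}(z)=\mathcal{L}_{\mu,q}(z)\,\bar{\mathcal{A}}\,\mathcal{L}_{\nu,r}(z)^\top , \] in particular $\mathcal{A}(0)=\mathcal{L}_{\mu,q}(0)\bar{\mathcal{A}}\mathcal{L}_{\nu,r}(0)^\top$. Moreover, when these matrices are square, $\det(\mathcal{A}(z))=\det(\bar{\mathcal{A}})$.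
   Context: Matrix indices start at $0$. $S_n\in\mathbb{R}^{n\times n}$ is the shift matrix with $(S_n)_{ij}=\delta_{i+1,j}$, and $J_n(z)=zI_n+S_n^\top$. For $k\ge0$, $A^k(z)\in\mathbb{C}^{q\times r}$ has entries $A^k(z)_{ij}=\frac{1}{i!j!}\frac{d^{i+j}}{dz^{i+j}}z^k=\frac{k!}{i!j!(k-i-j)!}z^{k-i-j}$ (zero if $i+j>k$), $i=0,\dots,q-1$, $j=0,\dots,r-1$, and $A^k:=A^k(0)$; thus $A^0$ has a single nonzero entry $A^0_{00}=1$. *)

theory Defs
  imports Complex_Main "Jordan_Normal_Form.Determinant"
begin

definition shift_mat :: "nat \<Rightarrow> complex mat" where
  "shift_mat n = mat n n (\<lambda>(i,j). if i + 1 = j then 1 else 0)"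

definition Jblk :: "nat \<Rightarrow> complex \<Rightarrow> complex mat" where
  "Jblk n z = z \<cdot>\<^sub>m 1\<^sub>m n + transpose_mat (shift_mat n)"

definition Akz :: "nat \<Rightarrow> nat \<Rightarrow> nat \<Rightarrow> complex \<Rightarrow> complex mat" where
  "Akz q r k z = mat q r (\<lambda>(i,j). if i + j \<le> k
      then (fact k / (fact i * fact j * fact (k - i - j))) * z ^ (k - i - j) else 0)"

definition block_mat :: "nat \<Rightarrow> nat \<Rightarrow> nat \<Rightarrow> nat \<Rightarrow> (nat \<Rightarrow> nat \<Rightarrow> complex mat) \<Rightarrow> complex mat" where
  "block_mat mu nu q r B = mat (mu * q) (nu * r)
      (\<lambda>(a,b). B (a div q) (b div r) $$ (a mod q, b mod r))"

definition calA :: "nat \<Rightarrow> nat \<Rightarrow> nat \<Rightarrow> nat \<Rightarrow> complex \<Rightarrow> complex mat" where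
  "calA q r mu nu z = block_mat mu nu q r (\<lambda>i j. Akz q r (i + j) z)"

definition barA :: "nat \<Rightarrow> nat \<Rightarrow> nat \<Rightarrow> nat \<Rightarrow> complex mat" where
  "barA q r mu nu = block_mat mu nu q r
      (\<lambda>i j. (transpose_mat (shift_mat q) ^\<^sub>m j) * Akz q r 0 0 * (shift_mat r ^\<^sub>m i))"

definition calL :: "nat \<Rightarrow> nat \<Rightarrow> complex \<Rightarrow> complex mat" where
  "calL mu q z = block_mat mu mu q q
      (\<lambda>i j. if j \<le> i then of_nat (i choose j) \<cdot>\<^sub>m (Jblk q z ^\<^sub>m (i - j)) else 0\<^sub>m q q)"

end

theory Submission
  imports Defs
begin

lemma Jblk_carrier[simp]: "Jblk q z \<in> carrier_mat q q"
  by (simp add: Jblk_def shift_mat_def)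

lemma Jblk_dims[simp]: "dim_row (Jblk q z) = q" "dim_col (Jblk q z) = q"
  by (simp_all add: Jblk_def shift_mat_def)

lemma shift_dims[simp]: "dim_row (shift_mat q) = q" "dim_col (shift_mat q) = q"
  by (simp_all add: shift_mat_def)

lemma shift_carrier[simp]: "shift_mat q \<in> carrier_mat q q"
  by (simp add: shift_mat_def)

lemma Jblk_entry: "s < q \<Longrightarrow> u < q \<Longrightarrow>
   Jblk q z $$ (s,u) = (if s = u then z else if s = u + 1 then 1 else 0)"
  by (auto simp: Jblk_def shift_mat_def)

lemma sum_delta2:
  fixes f :: "nat \<Rightarrow> complex"
  assumes "u < q"
  shows "(\<Sum>w<q. f w * (if w = u then z else if w = u + 1 then 1 else 0))
     = f u * z + (if u + 1 < q then f (u+1) else 0)"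
proof -
  have "(\<Sum>w<q. f w * (if w = u then z else if w = u + 1 then 1 else 0))
     = (\<Sum>w<q. (if w = u then f w * z else 0) + (if w = u + 1 then f w else 0))"
    by (rule sum.cong) auto
  also have "\<dots> = f u * z + (if u + 1 < q then f (u+1) else 0)"
    using assms by (simp add: sum.distrib)
  finally show ?thesis .
qed

lemma pascal_z: "d \<le> n \<Longrightarrow> of_nat (n choose Suc d) * (z::complex) ^ (n - Suc d) * z + of_nat (n choose d) * z ^ (n - d)
   = (of_nat (n choose d) + of_nat (n choose Suc d)) * z ^ (n - d)"
proof (cases "d = n")
  case True thus ?thesis by simp
next
  case False
  assume "d \<le> n"
  then have "n - Suc d + 1 = n - d" using False by auto
  then have "z ^ (n - Suc d) * z = z ^ (n - d)" by (metis power_Suc2 Suc_eq_plus1)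
  then show ?thesis by (simp add: algebra_simps)
qed

lemma Jpow_entry: "s < q \<Longrightarrow> u < q \<Longrightarrow>
   (Jblk q z ^\<^sub>m n) $$ (s,u) = (if u \<le> s then of_nat (n choose (s-u)) * z^(n-(s-u)) else 0)"
proof (induction n arbitrary: u)
  case 0
  then show ?case by (simp add: Jblk_def shift_mat_def)
next
  case (Suc n)
  have "(Jblk q z ^\<^sub>m Suc n) $$ (s,u) = (\<Sum>w<q. (Jblk q z ^\<^sub>m n) $$ (s,w) * Jblk q z $$ (w,u))"
    using Suc.prems by (subst pow_mat.simps, subst index_mult_mat(1)) (auto simp: scalar_prod_def lessThan_atLeast0 pow_mat_dim_square[OF Jblk_carrier])
  also have "\<dots> = (\<Sum>w<q. (Jblk q z ^\<^sub>m n) $$ (s,w) * (if w = u then z else if w = u + 1 then 1 else 0))"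
    by (rule sum.cong) (auto simp: Jblk_entry Suc.prems)
  also have "\<dots> = (Jblk q z ^\<^sub>m n) $$ (s,u) * z + (if u + 1 < q then (Jblk q z ^\<^sub>m n) $$ (s,u+1) else 0)"
    by (rule sum_delta2) (rule Suc.prems)
  also have "\<dots> = (if u \<le> s then of_nat (Suc n choose (s-u)) * z^(Suc n-(s-u)) else 0)"
  proof (cases "u \<le> s")
    case True
    show ?thesis
    proof (cases "u = s")
      case True thus ?thesis using Suc by simp
    next
      case False
      then have us: "u + 1 \<le> s" "u + 1 < q" using True Suc.prems by auto
      obtain d where d: "s - u = Suc d" using False True by (metis Suc_diff_Suc le_neq_implies_less)
      have sd: "s - (u+1) = d" using d by simp
      show ?thesis
      proof (cases "d \<le> n")
        case True
        have e: "Suc (n + u) - s = n - d" using d us by arith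
        show ?thesis using e Suc.IH[of u] Suc.IH[of "u+1"] Suc.prems us d sd True
          by (simp add: pascal_z[OF True])
      next
        case False
        then show ?thesis using Suc.IH[of u] Suc.IH[of "u+1"] Suc.prems us d sd
          by (simp add: binomial_eq_0)
      qed
    qed
  next
    case False
    then show ?thesis using Suc by auto
  qed
  finally show ?case .
qed

lemma ST_entry: "x < q \<Longrightarrow> w < q \<Longrightarrow> transpose_mat (shift_mat q) $$ (x,w) = (if x = w+1 then 1 else 0)"
  by (auto simp: shift_mat_def)

lemma S_entry: "x < q \<Longrightarrow> w < q \<Longrightarrow> shift_mat q $$ (x,w) = (if x + 1 = w then 1 else 0)"
  by (auto simp: shift_mat_def)

lemma ST_pow_entry: "u < q \<Longrightarrow> w < q \<Longrightarrow>
  (transpose_mat (shift_mat q) ^\<^sub>m l) $$ (u,w) = (if u = w + l then 1 else 0)"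
proof (induction l arbitrary: w)
  case 0 then show ?case by (simp add: shift_mat_def)
next
  case (Suc l)
  have "(transpose_mat (shift_mat q) ^\<^sub>m Suc l) $$ (u,w) =
     (\<Sum>x<q. (transpose_mat (shift_mat q) ^\<^sub>m l) $$ (u,x) * transpose_mat (shift_mat q) $$ (x,w))"
    using Suc.prems by (subst pow_mat.simps, subst index_mult_mat(1)) (auto simp: scalar_prod_def lessThan_atLeast0)
  also have "\<dots> = (\<Sum>x<q. if x = w + 1 then (if u = w + 1 + l then 1 else 0) else 0)"
    by (rule sum.cong) (auto simp: Suc ST_entry S_entry)
  also have "\<dots> = (if u = w + Suc l then 1 else 0)"
    using Suc.prems by (simp add: sum.delta)
  finally show ?case .
qed

lemma S_pow_entry: "w < r \<Longrightarrow> v < r \<Longrightarrow>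
  (shift_mat r ^\<^sub>m k) $$ (w,v) = (if v = w + k then 1 else 0)"
proof (induction k arbitrary: v)
  case 0 then show ?case by (simp add: shift_mat_def)
next
  case (Suc k)
  have "(shift_mat r ^\<^sub>m Suc k) $$ (w,v) =
     (\<Sum>x<r. (shift_mat r ^\<^sub>m k) $$ (w,x) * shift_mat r $$ (x,v))"
    using Suc.prems by (subst pow_mat.simps, subst index_mult_mat(1)) (auto simp: scalar_prod_def lessThan_atLeast0)
  also have "\<dots> = (\<Sum>x<r. if x = w + k then (if w + k + 1 = v then 1 else 0) else 0)"
    by (rule sum.cong) (auto simp: Suc S_entry)
  also have "\<dots> = (if v = w + Suc k then 1 else 0)"
    using Suc.prems by (simp add: sum.delta)
  finally show ?case .
qed

lemma A00_entry: "a < q \<Longrightarrow> b < r \<Longrightarrow> Akz q r 0 0 $$ (a,b) = (if a = 0 \<and> b = 0 then 1 else 0)"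
  by (simp add: Akz_def)

lemma barblock_entry:
  assumes "u < q" "v < r"
  shows "((transpose_mat (shift_mat q) ^\<^sub>m j) * Akz q r 0 0 * (shift_mat r ^\<^sub>m i)) $$ (u,v)
     = (if u = j \<and> v = i then 1 else 0)"
proof -
  let ?X = "transpose_mat (shift_mat q) ^\<^sub>m j" and ?Y = "shift_mat r ^\<^sub>m i"
  have dX: "dim_row ?X = q" "dim_col ?X = q" by (simp_all add: pow_mat_dim_square[of _ q])
  have dY: "dim_row ?Y = r" "dim_col ?Y = r" by simp_all
  have dA: "dim_row (Akz q r 0 0) = q" "dim_col (Akz q r 0 0) = r" by (simp_all add: Akz_def)
  have XA: "(?X * Akz q r 0 0) $$ (u, w) = (if w = 0 then ?X $$ (u,0) else 0)" if "w < r" for w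
  proof -
    have "(?X * Akz q r 0 0) $$ (u, w) = (\<Sum>x<q. ?X $$ (u,x) * Akz q r 0 0 $$ (x,w))"
      using assms that dX dA by (subst index_mult_mat(1)) (auto simp: scalar_prod_def lessThan_atLeast0)
    also have "\<dots> = (\<Sum>x<q. if x = 0 then (if w = 0 then ?X $$ (u,0) else 0) else 0)"
      by (rule sum.cong) (use that in \<open>auto simp: A00_entry\<close>)
    also have "\<dots> = (if w = 0 then ?X $$ (u,0) else 0)" using assms by simp
    finally show ?thesis .
  qed
  have "(?X * Akz q r 0 0 * ?Y) $$ (u,v) = (\<Sum>w<r. (?X * Akz q r 0 0) $$ (u,w) * ?Y $$ (w,v))"
    using assms dX dY dA by (subst index_mult_mat(1)) (auto simp: scalar_prod_def lessThan_atLeast0)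
  also have "\<dots> = (\<Sum>w<r. if w = 0 then ?X $$ (u,0) * ?Y $$ (0,v) else 0)"
    by (rule sum.cong) (auto simp: XA)
  also have "\<dots> = ?X $$ (u,0) * ?Y $$ (0,v)" using assms by simp
  also have "\<dots> = (if u = j \<and> v = i then 1 else 0)"
    using assms by (simp add: ST_pow_entry S_pow_entry)
  finally show ?thesis .
qed

lemma barA_entry:
  assumes "q > 0" "r > 0" "c < mu * q" "d < nu * r"
  shows "barA q r mu nu $$ (c,d) = (if c mod q = d div r \<and> d mod r = c div q then 1 else 0)"
proof -
  have "barA q r mu nu $$ (c,d) = ((transpose_mat (shift_mat q) ^\<^sub>m (d div r)) * Akz q r 0 0 * (shift_mat r ^\<^sub>m (c div q))) $$ (c mod q, d mod r)"
    using assms by (simp add: barA_def block_mat_def del: index_mult_mat)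
  also have "\<dots> = (if c mod q = d div r \<and> d mod r = c div q then 1 else 0)"
    using assms by (subst barblock_entry) auto
  finally show ?thesis .
qed


lemma block_sum: fixes f :: "nat \<Rightarrow> 'a::comm_monoid_add" shows "(\<Sum>c<m*q. f c) = (\<Sum>k<m. \<Sum>u<q. f (k*q+u))"
proof -
  have "(\<Sum>c<m*q. f c) = (\<Sum>k<m. sum f {k*q..<k*q+q})"
    using sum.nat_group[of f q m] by simp
  also have "\<dots> = (\<Sum>k<m. \<Sum>u<q. f (k*q+u))"
  proof (rule sum.cong[OF refl])
    fix k
    show "sum f {k*q..<k*q+q} = (\<Sum>u<q. f (k*q+u))"
      using sum.shift_bounds_nat_ivl[of f 0 "k*q" q]
      by (simp add: atLeast0LessThan add.commute)
  qed
  finally show ?thesis .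
qed

lemma sum_restr1:
  assumes "finite A" "finite B" "\<And>x. f x \<noteq> 0 \<Longrightarrow> x \<in> A \<and> x \<in> B"
  shows "sum f A = sum f B"
proof -
  have "sum f A = sum f (A \<inter> B)"
    by (rule sum.mono_neutral_right) (use assms in auto)
  also have "\<dots> = sum f B"
    by (rule sum.mono_neutral_left) (use assms in auto)
  finally show ?thesis .
qed

lemma blk_lt: "i < m \<Longrightarrow> s < (q::nat) \<Longrightarrow> i*q+s < m*q"
proof -
  assume a: "i < m" "s < q"
  have "(i+1)*q \<le> m*q" using a by (intro mult_le_mono1) auto
  then show ?thesis using a by simp
qed

lemma L_entry:
  assumes "q > 0" "i < mu" "s < q" "k < mu" "u < q"
  shows "calL mu q z $$ (i*q+s, k*q+u) =
    (if u \<le> s then of_nat ((i choose k) * ((i-k) choose (s-u))) * z^((i-k)-(s-u)) else 0)"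
proof -
  have lt: "i*q+s < mu*q" "k*q+u < mu*q"
    using assms by (auto intro: blk_lt)
  have "calL mu q z $$ (i*q+s, k*q+u) = (if k \<le> i then of_nat (i choose k) \<cdot>\<^sub>m (Jblk q z ^\<^sub>m (i - k)) else 0\<^sub>m q q) $$ (s,u)"
    using assms lt by (simp add: calL_def block_mat_def)
  also have "\<dots> = (if u \<le> s then of_nat ((i choose k) * ((i-k) choose (s-u))) * z^((i-k)-(s-u)) else 0)"
    using assms by (cases "k \<le> i") (auto simp: Jpow_entry pow_mat_dim_square[OF Jblk_carrier] binomial_eq_0)
  finally show ?thesis .
qed

lemma calA_entry:
  assumes "q > 0" "r > 0" "i < mu" "s < q" "j < nu" "t < r"
  shows "calA q r mu nu z $$ (i*q+s, j*r+t) = Akz q r (i+j) z $$ (s,t)"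
proof -
  have lt: "i*q+s < mu*q" "j*r+t < nu*r"
    using assms by (auto intro: blk_lt)
  then show ?thesis using assms by (simp add: calA_def block_mat_def)
qed


lemma trisym: "(n choose a) * ((n-a) choose b) = (n choose b) * ((n-b) choose a)"
proof (cases "a + b \<le> n")
  case True
  have "real ((n choose a) * ((n-a) choose b)) = fact n / (fact a * fact (n-a)) * (fact (n-a) / (fact b * fact (n-a-b)))"
    using True by (simp add: binomial_fact)
  also have "\<dots> = fact n / (fact a * fact b * fact (n-a-b))"
    by (simp add: field_simps)
  also have "\<dots> = fact n / (fact b * fact (n-b)) * (fact (n-b) / (fact a * fact (n-b-a)))"
    by (simp add: field_simps diff_diff_add add.commute)
  also have "\<dots> = real ((n choose b) * ((n-b) choose a))"
    using True by (simp add: binomial_fact)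
  finally show ?thesis by (simp only: of_nat_eq_iff)
next
  case False
  then show ?thesis by (cases "a \<le> n"; cases "b \<le> n") (auto simp: binomial_eq_0)
qed

lemma comb:
  "(\<Sum>k\<le>t. \<Sum>l\<le>s. (i choose k) * ((i-k) choose (s-l)) * ((j choose l) * ((j-l) choose (t-k))))
   = ((i+j) choose t) * ((i+j-t) choose s)"
proof -
  have "(\<Sum>k\<le>t. \<Sum>l\<le>s. (i choose k) * ((i-k) choose (s-l)) * ((j choose l) * ((j-l) choose (t-k))))
      = (\<Sum>k\<le>t. (i choose k) * (j choose (t-k)) * (\<Sum>l\<le>s. ((j-(t-k)) choose l) * ((i-k) choose (s-l))))"
  proof (rule sum.cong[OF refl])
    fix k
    show "(\<Sum>l\<le>s. (i choose k) * ((i-k) choose (s-l)) * ((j choose l) * ((j-l) choose (t-k))))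
      = (i choose k) * (j choose (t-k)) * (\<Sum>l\<le>s. ((j-(t-k)) choose l) * ((i-k) choose (s-l)))"
      unfolding sum_distrib_left
      apply (rule sum.cong[OF refl])
      subgoal for l using trisym[of j l "t-k"] by (simp add: algebra_simps)
      done
  qed
  also have "\<dots> = (\<Sum>k\<le>t. (i choose k) * (j choose (t-k)) * ((j-(t-k)) + (i-k) choose s))"
    by (simp add: vandermonde)
  also have "\<dots> = (\<Sum>k\<le>t. (i choose k) * (j choose (t-k)) * ((i+j-t) choose s))"
  proof (rule sum.cong[OF refl])
    fix k assume "k \<in> {..t}"
    then show "(i choose k) * (j choose (t-k)) * ((j-(t-k)) + (i-k) choose s) = (i choose k) * (j choose (t-k)) * ((i+j-t) choose s)"
      by (cases "k \<le> i \<and> t - k \<le> j") (auto simp: binomial_eq_0 add.commute)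
  qed
  also have "\<dots> = ((i+j) choose t) * ((i+j-t) choose s)"
    by (simp add: sum_distrib_right[symmetric] vandermonde)
  finally show ?thesis .
qed


lemma calL_dims[simp]: "dim_row (calL mu q z) = mu*q" "dim_col (calL mu q z) = mu*q"
  by (simp_all add: calL_def block_mat_def)
lemma barA_dims[simp]: "dim_row (barA q r mu nu) = mu*q" "dim_col (barA q r mu nu) = nu*r"
  by (simp_all add: barA_def block_mat_def)
lemma calA_dims[simp]: "dim_row (calA q r mu nu z) = mu*q" "dim_col (calA q r mu nu z) = nu*r"
  by (simp_all add: calA_def block_mat_def)

lemma Akz_val:
  assumes "s < q" "t < r"
  shows "Akz q r n z $$ (s,t) = of_nat ((n choose t) * ((n-t) choose s)) * z^(n-s-t)"
proof (cases "s + t \<le> n")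
  case True
  have "(of_nat ((n choose t) * ((n-t) choose s)) :: complex) = fact n / (fact t * fact (n-t)) * (fact (n-t) / (fact s * fact (n-t-s)))"
    using True by (simp add: binomial_fact)
  also have "\<dots> = fact n / (fact s * fact t * fact (n-s-t))"
    by (simp add: field_simps diff_diff_add add.commute)
  finally show ?thesis using assms True by (simp add: Akz_def diff_diff_add add.commute)
next
  case False
  then show ?thesis using assms by (cases "t \<le> n") (auto simp: Akz_def binomial_eq_0)
qed

lemma zexp:
  assumes "(i choose k) * ((i-k) choose (s-u)) * ((j choose u) * ((j-u) choose (t-k))) \<noteq> 0"
    "u \<le> s" "k \<le> t"
  shows "(z::complex)^((i-k)-(s-u)) * z^((j-u)-(t-k)) = z^(i+j-s-t)"
proof -
  have "k \<le> i" "s-u \<le> i-k" "u \<le> j" "t-k \<le> j-u" using assms(1) by (auto simp: binomial_eq_0_iff)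
  then have "(i-k)-(s-u) + ((j-u)-(t-k)) = i+j-s-t" using assms(2,3) by arith
  then show ?thesis by (metis power_add)
qed

lemma main_entry:
  assumes q: "q > 0" and r: "r > 0" and i: "i < mu" and s: "s < q" and j: "j < nu" and t: "t < r"
  shows "(calL mu q z * barA q r mu nu * transpose_mat (calL nu r z)) $$ (i*q+s, j*r+t)
     = Akz q r (i+j) z $$ (s,t)"
proof -
  let ?L = "calL mu q z" and ?B = "barA q r mu nu" and ?L' = "calL nu r z"
  define a where "a = i*q+s"
  define b where "b = j*r+t"
  have a: "a < mu*q" and b: "b < nu*r" using i s j t by (auto simp: a_def b_def blk_lt)
  have "(?L * ?B * transpose_mat ?L') $$ (a,b) = (\<Sum>d<nu*r. (\<Sum>c<mu*q. ?L $$ (a,c) * ?B $$ (c,d)) * ?L' $$ (b,d))"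
    using a b by (simp add: scalar_prod_def lessThan_atLeast0)
  also have "\<dots> = (\<Sum>c<mu*q. \<Sum>d<nu*r. ?L $$ (a,c) * (?B $$ (c,d) * ?L' $$ (b,d)))"
    by (simp add: sum_distrib_right sum.swap[of _ "{..<nu*r}"] mult.assoc)
  also have "\<dots> = (\<Sum>k<mu. \<Sum>u<q. \<Sum>l<nu. \<Sum>v<r. ?L $$ (a,k*q+u) * (?B $$ (k*q+u,l*r+v) * ?L' $$ (b,l*r+v)))"
    by (simp add: block_sum)
  also have "\<dots> = (\<Sum>k<mu. \<Sum>u<q. ?L $$ (a,k*q+u) * (if u < nu \<and> k < r then ?L' $$ (b,u*r+k) else 0))"
  proof (intro sum.cong refl)
    fix k u assume k: "k \<in> {..<mu}" and u: "u \<in> {..<q}"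
    have "(\<Sum>l<nu. \<Sum>v<r. ?L $$ (a,k*q+u) * (?B $$ (k*q+u,l*r+v) * ?L' $$ (b,l*r+v)))
       = (\<Sum>l<nu. \<Sum>v<r. if l = u then (if v = k then ?L $$ (a,k*q+u) * ?L' $$ (b,u*r+k) else 0) else 0)"
    proof (intro sum.cong refl)
      fix l v assume l: "l \<in> {..<nu}" and v: "v \<in> {..<r}"
      have "?B $$ (k*q+u,l*r+v) = (if u = l \<and> v = k then 1 else 0)"
        using k u l v q r by (subst barA_entry) (auto simp: blk_lt)
      then show "?L $$ (a,k*q+u) * (?B $$ (k*q+u,l*r+v) * ?L' $$ (b,l*r+v))
          = (if l = u then (if v = k then ?L $$ (a,k*q+u) * ?L' $$ (b,u*r+k) else 0) else 0)"
        by auto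
    qed
    also have "\<dots> = (\<Sum>l<nu. if l = u then (if k < r then ?L $$ (a,k*q+u) * ?L' $$ (b,u*r+k) else 0) else 0)"
      by (intro sum.cong refl) (simp add: sum.delta)
    also have "\<dots> = ?L $$ (a,k*q+u) * (if u < nu \<and> k < r then ?L' $$ (b,u*r+k) else 0)"
      by (simp add: sum.delta)
    finally show "(\<Sum>l<nu. \<Sum>v<r. ?L $$ (a,k*q+u) * (?B $$ (k*q+u,l*r+v) * ?L' $$ (b,l*r+v)))
       = ?L $$ (a,k*q+u) * (if u < nu \<and> k < r then ?L' $$ (b,u*r+k) else 0)" .
  qed
  also have "\<dots> = (\<Sum>k<mu. \<Sum>u<q. if k \<le> t \<and> u \<le> s then
        of_nat ((i choose k) * ((i-k) choose (s-u)) * ((j choose u) * ((j-u) choose (t-k)))) * z^(i+j-s-t) else 0)"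
  proof (intro sum.cong refl)
    fix k u assume k: "k \<in> {..<mu}" and u: "u \<in> {..<q}"
    show "?L $$ (a,k*q+u) * (if u < nu \<and> k < r then ?L' $$ (b,u*r+k) else 0) =
       (if k \<le> t \<and> u \<le> s then
        of_nat ((i choose k) * ((i-k) choose (s-u)) * ((j choose u) * ((j-u) choose (t-k)))) * z^(i+j-s-t) else 0)"
    proof (cases "u < nu \<and> k < r")
      case True
      have LL: "?L $$ (a,k*q+u) * ?L' $$ (b,u*r+k) =
        (if u \<le> s then of_nat ((i choose k) * ((i-k) choose (s-u))) * z^((i-k)-(s-u)) else 0) *
        (if k \<le> t then of_nat ((j choose u) * ((j-u) choose (t-k))) * z^((j-u)-(t-k)) else 0)"
        unfolding a_def b_def using q r i s j t k u True by (simp add: L_entry)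
      show ?thesis
      proof (cases "k \<le> t \<and> u \<le> s")
        case ks: True
        show ?thesis
        proof (cases "(i choose k) * ((i-k) choose (s-u)) * ((j choose u) * ((j-u) choose (t-k))) = 0")
          case True
          then have "(of_nat ((i choose k) * ((i-k) choose (s-u))) :: complex) * of_nat ((j choose u) * ((j-u) choose (t-k))) = 0"
            by (metis of_nat_mult of_nat_0)
          then have "?L $$ (a,k*q+u) * ?L' $$ (b,u*r+k) = 0"
            using LL ks by (simp add: algebra_simps) (metis mult_zero_left mult.assoc mult.commute)
          moreover have "(of_nat ((i choose k) * ((i-k) choose (s-u)) * ((j choose u) * ((j-u) choose (t-k)))) :: complex) * z^(i+j-s-t) = 0"
            by (simp only: True of_nat_0 mult_zero_left)
          ultimately show ?thesis using ks \<open>u < nu \<and> k < r\<close> by (simp only: if_True simp_thms)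
        next
          case False
          have "?L $$ (a,k*q+u) * ?L' $$ (b,u*r+k) = of_nat ((i choose k) * ((i-k) choose (s-u)) * ((j choose u) * ((j-u) choose (t-k))))
              * (z^((i-k)-(s-u)) * z^((j-u)-(t-k)))"
            using LL ks by (simp add: algebra_simps)
          then show ?thesis using zexp[OF False, of z] ks \<open>u < nu \<and> k < r\<close> by simp
        qed
      next
        case False
        then show ?thesis using LL True by auto
      qed
    next
      case False
      have "k \<le> t \<and> u \<le> s \<Longrightarrow> (j choose u) = 0"
        using False t j by (auto simp: binomial_eq_0)
      then show ?thesis using False by auto
    qed
  qed
  also have "\<dots> = (\<Sum>k\<le>t. \<Sum>u\<le>s. if k \<le> t \<and> u \<le> s then
        of_nat ((i choose k) * ((i-k) choose (s-u)) * ((j choose u) * ((j-u) choose (t-k)))) * z^(i+j-s-t) else 0)"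
  proof (rule trans[OF sum_restr1[where B = "{..t}"]], simp, simp)
    fix k
    let ?h = "\<lambda>u. if k \<le> t \<and> u \<le> s then
        of_nat ((i choose k) * ((i-k) choose (s-u)) * ((j choose u) * ((j-u) choose (t-k)))) * z^(i+j-s-t) else (0::complex)"
    show "sum ?h {..<q} \<noteq> 0 \<Longrightarrow> k \<in> {..<mu} \<and> k \<in> {..t}"
    proof -
      assume "sum ?h {..<q} \<noteq> 0"
      then obtain u where "?h u \<noteq> 0"
      proof -
        assume n: "sum ?h {..<q} \<noteq> 0" and c: "\<And>u. ?h u \<noteq> 0 \<Longrightarrow> thesis"
        show thesis
        proof (rule ccontr)
          assume "\<not> thesis"
          then have "\<forall>u\<in>{..<q}. ?h u = 0" using c by blast
          then have "sum ?h {..<q} = 0" by (rule sum.neutral)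
          then show False using n by simp
        qed
      qed
      then show ?thesis using i by (auto simp: binomial_eq_0_iff split: if_splits)
    qed
  next
    show "(\<Sum>k\<le>t. \<Sum>u<q. if k \<le> t \<and> u \<le> s then
        of_nat ((i choose k) * ((i-k) choose (s-u)) * ((j choose u) * ((j-u) choose (t-k)))) * z^(i+j-s-t) else 0)
      = (\<Sum>k\<le>t. \<Sum>u\<le>s. if k \<le> t \<and> u \<le> s then
        of_nat ((i choose k) * ((i-k) choose (s-u)) * ((j choose u) * ((j-u) choose (t-k)))) * z^(i+j-s-t) else 0)"
      by (intro sum.cong refl sum_restr1) (use s in \<open>auto split: if_splits\<close>)
  qed
  also have "\<dots> = (\<Sum>k\<le>t. \<Sum>u\<le>s.
        of_nat ((i choose k) * ((i-k) choose (s-u)) * ((j choose u) * ((j-u) choose (t-k)))) * z^(i+j-s-t))"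
    by (intro sum.cong refl) auto
  also have "\<dots> = of_nat (\<Sum>k\<le>t. \<Sum>u\<le>s. (i choose k) * ((i-k) choose (s-u)) * ((j choose u) * ((j-u) choose (t-k)))) * z^(i+j-s-t)"
    by (simp add: sum_distrib_right)
  also have "\<dots> = of_nat (((i+j) choose t) * ((i+j-t) choose s)) * z^(i+j-s-t)"
    by (simp only: comb)
  also have "\<dots> = Akz q r (i+j) z $$ (s,t)"
    using s t by (simp add: Akz_val)
  finally show ?thesis unfolding a_def b_def .
qed


lemma entry_split: "(q::nat) > 0 \<Longrightarrow> a < m*q \<Longrightarrow> a = (a div q)*q + a mod q \<and> a div q < m \<and> a mod q < q"
  using div_mult_mod_eq[of a q] less_mult_imp_div_less[of a m q] mod_less_divisor[of q a] by simp

lemma prod_eq: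
  assumes q: "q > 0" and r: "r > 0"
  shows "calA q r mu nu z = calL mu q z * barA q r mu nu * transpose_mat (calL nu r z)"
proof (rule eq_matI)
  fix a b assume a: "a < dim_row (calL mu q z * barA q r mu nu * transpose_mat (calL nu r z))"
    and b: "b < dim_col (calL mu q z * barA q r mu nu * transpose_mat (calL nu r z))"
  from a b have a': "a < mu*q" and b': "b < nu*r" by simp_all
  obtain i s where ea: "a = i*q+s" "i < mu" "s < q" using entry_split[OF q a'] by blast
  obtain j t where eb: "b = j*r+t" "j < nu" "t < r" using entry_split[OF r b'] by blast
  show "calA q r mu nu z $$ (a,b) = (calL mu q z * barA q r mu nu * transpose_mat (calL nu r z)) $$ (a,b)"
    unfolding ea eb using q r ea eb by (simp only: calA_entry main_entry)
qed simp_all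

lemma det_calL: assumes q: "q > 0" shows "det (calL mu q z) = 1"
proof -
  have c: "calL mu q z \<in> carrier_mat (mu*q) (mu*q)" by (intro carrier_matI) simp_all
  have lt: "calL mu q z $$ (a,c) = 0" if ac: "a < c" "c < mu*q" for a c
  proof -
    have a': "a < mu*q" using ac by simp
    obtain i s where ea: "a = i*q+s" "i < mu" "s < q" using entry_split[OF q a'] by blast
    obtain k u where ec: "c = k*q+u" "k < mu" "u < q" using entry_split[OF q ac(2)] by blast
    have "a div q \<le> c div q" by (rule div_le_mono) (use ac in simp)
    moreover have "a div q = i" "c div q = k" using ea ec q by simp_all
    ultimately have "i \<le> k" by simp
    show ?thesis
    proof (cases "i = k")
      case True
      then have "s < u" using ac ea ec by simp
      then show ?thesis using ea ec q by (simp add: L_entry)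
    next
      case False
      then have "i < k" using \<open>i \<le> k\<close> by simp
      then show ?thesis using ea ec q by (simp add: L_entry binomial_eq_0)
    qed
  qed
  have dg: "calL mu q z $$ (a,a) = 1" if al: "a < mu*q" for a
  proof -
    obtain i s where ea: "a = i*q+s" "i < mu" "s < q" using entry_split[OF q al] by blast
    then show ?thesis using q by (simp add: L_entry)
  qed
  have "det (calL mu q z) = prod_list (diag_mat (calL mu q z))"
    by (rule det_lower_triangular[OF lt c])
  also have "diag_mat (calL mu q z) = map (\<lambda>_. 1) [0..<mu*q]"
    unfolding diag_mat_def by (auto intro!: map_cong simp: dg)
  also have "prod_list (map (\<lambda>_. 1::complex) [0..<mu*q]) = 1"
    by (simp add: map_replicate_const)
  finally show ?thesis .
qed

theorem theorem2p2:
  fixes q r mu nu :: nat and z :: complex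
  assumes "q > 0" "r > 0" "mu > 0" "nu > 0"
  shows "calA q r mu nu z = calL mu q z * barA q r mu nu * transpose_mat (calL nu r z)
    \<and> calA q r mu nu 0 = calL mu q 0 * barA q r mu nu * transpose_mat (calL nu r 0)
    \<and> (mu * q = nu * r \<longrightarrow> det (calA q r mu nu z) = det (barA q r mu nu))"
proof (intro conjI impI)
  show "calA q r mu nu z = calL mu q z * barA q r mu nu * transpose_mat (calL nu r z)"
    using assms(1,2) by (rule prod_eq)
  show "calA q r mu nu 0 = calL mu q 0 * barA q r mu nu * transpose_mat (calL nu r 0)"
    using assms(1,2) by (rule prod_eq)
  assume sq: "mu * q = nu * r"
  let ?n = "mu*q"
  have cL: "calL mu q z \<in> carrier_mat ?n ?n" by (intro carrier_matI) simp_all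
  have cB: "barA q r mu nu \<in> carrier_mat ?n ?n" using sq by (intro carrier_matI) simp_all
  have cL': "calL nu r z \<in> carrier_mat ?n ?n" using sq by (intro carrier_matI) simp_all
  have cL'T: "transpose_mat (calL nu r z) \<in> carrier_mat ?n ?n" using sq by (intro carrier_matI) simp_all
  have cLB: "calL mu q z * barA q r mu nu \<in> carrier_mat ?n ?n" using sq by (intro carrier_matI) simp_all
  have "det (calA q r mu nu z) = det (calL mu q z * barA q r mu nu * transpose_mat (calL nu r z))"
    using prod_eq[OF assms(1,2)] by simp
  also have "\<dots> = det (calL mu q z * barA q r mu nu) * det (transpose_mat (calL nu r z))"
    by (rule det_mult[OF cLB cL'T])
  also have "det (calL mu q z * barA q r mu nu) = det (calL mu q z) * det (barA q r mu nu)"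
    by (rule det_mult[OF cL cB])
  also have "det (transpose_mat (calL nu r z)) = det (calL nu r z)"
    by (rule det_transpose[OF cL'])
  also have "det (calL mu q z) = 1" using assms(1) by (rule det_calL)
  also have "det (calL nu r z) = 1" using assms(2) by (rule det_calL)
  finally show "det (calA q r mu nu z) = det (barA q r mu nu)" by simp
qed

end
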